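(* Let $T$ be a tree of order $n \geq 4$ which is not the star $S_n$ and not one of the paths $P_4$, $P_5$, $P_6$. Then $$|E(\Lambda(T))| \geq \tfrac{1}{2}\, n\,(n - D(T)).$$
   Context: All graphs are simple and finite. For a graph $G$ and disjoint $X, Y \subseteq V(G)$, $E(X,Y)$ denotes the set of edges with one endpoint in $X$ and the other in $Y$. An ordered pair $(X,Y)$ of disjoint subsets of $V(G)$ with $|X|=|Y|=2$ is an odd pair of $G$ if $|E(X,Y)|$ is odd. A $2$-subset $\{u,v\}\subseteq V(G)$ is an odd set if it is the first component of some odd pair of $G$. The graph $\Lambda(G)$ has vertex set $V(G)$, and $uv$ is an edge of $\Lambda(G)$ iff $\{u,v\}$ is an odd set of $G$. For a tree $T$, $D(T)$ denotes the maximum, over vertices $w$ of $T$, of the number of leaves of $T$ adjacent to $w$. $S_n$ is the star and $P_k$ the path on $k$ vertices. *)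

theory Defs
  imports Complex_Main
begin

definition simple_graph :: "'a set \<Rightarrow> 'a set set \<Rightarrow> bool" where
  "simple_graph V E \<longleftrightarrow> finite V \<and> (\<forall>e\<in>E. e \<subseteq> V \<and> card e = 2)"

definition adj :: "'a set set \<Rightarrow> 'a \<Rightarrow> 'a \<Rightarrow> bool" where
  "adj E u v \<longleftrightarrow> {u, v} \<in> E"

definition connected_graph :: "'a set \<Rightarrow> 'a set set \<Rightarrow> bool" where
  "connected_graph V E \<longleftrightarrow> V \<noteq> {} \<and>
     (\<forall>u\<in>V. \<forall>v\<in>V. (\<lambda>x y. adj E x y \<and> x \<in> V \<and> y \<in> V)\<^sup>*\<^sup>* u v)"

definition has_cycle :: "'a set \<Rightarrow> 'a set set \<Rightarrow> bool" where
  "has_cycle V E \<longleftrightarrow> (\<exists>cs. length cs \<ge> 3 \<and> distinct cs \<and> set cs \<subseteq> V \<and>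
      (\<forall>i. Suc i < length cs \<longrightarrow> adj E (cs ! i) (cs ! Suc i)) \<and>
      adj E (last cs) (hd cs))"

definition is_tree :: "'a set \<Rightarrow> 'a set set \<Rightarrow> bool" where
  "is_tree V E \<longleftrightarrow> simple_graph V E \<and> connected_graph V E \<and> \<not> has_cycle V E"

definition edges_between :: "'a set set \<Rightarrow> 'a set \<Rightarrow> 'a set \<Rightarrow> 'a set set" where
  "edges_between E X Y = {e \<in> E. \<exists>x\<in>X. \<exists>y\<in>Y. e = {x, y}}"

definition odd_pair :: "'a set \<Rightarrow> 'a set set \<Rightarrow> 'a set \<Rightarrow> 'a set \<Rightarrow> bool" where
  "odd_pair V E X Y \<longleftrightarrow> X \<subseteq> V \<and> Y \<subseteq> V \<and> X \<inter> Y = {} \<and> card X = 2 \<and> card Y = 2 \<and>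
     odd (card (edges_between E X Y))"

definition odd_set :: "'a set \<Rightarrow> 'a set set \<Rightarrow> 'a set \<Rightarrow> bool" where
  "odd_set V E X \<longleftrightarrow> (\<exists>Y. odd_pair V E X Y)"

definition Lambda_edges :: "'a set \<Rightarrow> 'a set set \<Rightarrow> 'a set set" where
  "Lambda_edges V E = {X. X \<subseteq> V \<and> card X = 2 \<and> odd_set V E X}"

definition degree :: "'a set \<Rightarrow> 'a set set \<Rightarrow> 'a \<Rightarrow> nat" where
  "degree V E v = card {u \<in> V. adj E v u}"

definition is_leaf :: "'a set \<Rightarrow> 'a set set \<Rightarrow> 'a \<Rightarrow> bool" where
  "is_leaf V E v \<longleftrightarrow> v \<in> V \<and> degree V E v = 1"

definition Dmax :: "'a set \<Rightarrow> 'a set set \<Rightarrow> nat" where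
  "Dmax V E = Max ((\<lambda>w. card {l \<in> V. is_leaf V E l \<and> adj E w l}) ` V)"

definition graph_iso :: "'a set \<Rightarrow> 'a set set \<Rightarrow> 'b set \<Rightarrow> 'b set set \<Rightarrow> bool" where
  "graph_iso V E W F \<longleftrightarrow> (\<exists>f. bij_betw f V W \<and>
     (\<forall>x\<in>V. \<forall>y\<in>V. {x, y} \<in> E \<longleftrightarrow> {f x, f y} \<in> F))"

definition star_edges :: "nat \<Rightarrow> nat set set" where
  "star_edges n = {{0, i} | i. 0 < i \<and> i < n}"

definition path_edges :: "nat \<Rightarrow> nat set set" where
  "path_edges k = {{i, Suc i} | i. Suc i < k}"

end

theory Submission
  imports Defs
begin


definition walk :: "'a set set \<Rightarrow> 'a list \<Rightarrow> bool" where
  "walk E cs \<longleftrightarrow> (\<forall>i. Suc i < length cs \<longrightarrow> adj E (cs ! i) (cs ! Suc i))"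

lemma walk_single[simp]: "walk E [x]"
  by (simp add: walk_def)

lemma walk_Cons2[simp]: "walk E (x # y # zs) \<longleftrightarrow> adj E x y \<and> walk E (y # zs)"
proof
  assume w: "walk E (x # y # zs)"
  have "Suc 0 < length (x # y # zs)" by simp
  then have "adj E ((x # y # zs) ! 0) ((x # y # zs) ! Suc 0)" using w unfolding walk_def by blast
  then have "adj E x y" by simp
  moreover have "walk E (y # zs)" unfolding walk_def
  proof (intro allI impI)
    fix i assume "Suc i < length (y # zs)"
    then have "Suc (Suc i) < length (x # y # zs)" by simp
    then have "adj E ((x # y # zs) ! Suc i) ((x # y # zs) ! Suc (Suc i))" using w unfolding walk_def by blast
    then show "adj E ((y # zs) ! i) ((y # zs) ! Suc i)" by simp
  qed
  ultimately show "adj E x y \<and> walk E (y # zs)" by simp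
next
  assume h: "adj E x y \<and> walk E (y # zs)"
  show "walk E (x # y # zs)" unfolding walk_def
  proof (intro allI impI)
    fix i assume i: "Suc i < length (x # y # zs)"
    show "adj E ((x # y # zs) ! i) ((x # y # zs) ! Suc i)"
    proof (cases i)
      case 0 then show ?thesis using h by simp
    next
      case (Suc k)
      then have "Suc k < length (y # zs)" using i by simp
      then have "adj E ((y # zs) ! k) ((y # zs) ! Suc k)" using h unfolding walk_def by blast
      then show ?thesis using Suc by simp
    qed
  qed
qed

lemma adj_sym: "adj E x y \<Longrightarrow> adj E y x"
  by (simp add: adj_def insert_commute)

locale T =
  fixes V :: "'a set" and E :: "'a set set"
  assumes tree: "is_tree V E" and big: "card V \<ge> 4"
begin

lemma finV: "finite V" using tree by (simp add: is_tree_def simple_graph_def)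

lemma adj_V: "adj E x y \<Longrightarrow> x \<in> V \<and> y \<in> V"
  using tree by (auto simp: is_tree_def simple_graph_def adj_def)

lemma adj_irrefl: "\<not> adj E x x"
  using tree by (auto simp: is_tree_def simple_graph_def adj_def)

lemma no_cycle: "\<not> has_cycle V E" using tree by (simp add: is_tree_def)

lemma conn: "u \<in> V \<Longrightarrow> v \<in> V \<Longrightarrow> (\<lambda>x y. adj E x y \<and> x \<in> V \<and> y \<in> V)\<^sup>*\<^sup>* u v"
  using tree by (simp add: is_tree_def connected_graph_def)

lemma closed_set:
  assumes "x \<in> S" "\<forall>a\<in>S. \<forall>b. adj E a b \<longrightarrow> b \<in> S" "y \<in> V" "y \<notin> S" "x \<in> V"
  shows False
proof -
  have r: "(\<lambda>x y. adj E x y \<and> x \<in> V \<and> y \<in> V)\<^sup>*\<^sup>* x y" using conn assms by blast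
  have "y \<in> S" using r
  proof (induction rule: rtranclp_induct)
    case base then show ?case using assms(1) by simp
  next
    case (step y z) then show ?case using assms(2) by blast
  qed
  then show False using assms(4) by simp
qed

lemma has_neighbor: assumes "x \<in> V" shows "\<exists>y. adj E x y"
proof (rule ccontr)
  assume "\<not> (\<exists>y. adj E x y)"
  moreover obtain z where "z \<in> V" "z \<noteq> x"
  proof -
    have "card (V - {x}) \<ge> 3" using big assms finV by simp
    then have "V - {x} \<noteq> {}" by (metis card.empty not_numeral_le_zero)
    then show ?thesis using that by blast
  qed
  ultimately show False using closed_set[of x "{x}" z] assms by auto
qed

lemma path_chord:
  assumes d: "distinct cs" and s: "set cs \<subseteq> V" and w: "walk E cs"
    and ij: "i + 2 \<le> j" "j < length cs" and a: "adj E (cs ! j) (cs ! i)"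
  shows False
proof -
  define c where "c = take (j + 1 - i) (drop i cs)"
  have len: "length c = j + 1 - i" using ij by (simp add: c_def)
  have nth: "\<And>k. k < j + 1 - i \<Longrightarrow> c ! k = cs ! (i + k)" using ij by (simp add: c_def)
  have "has_cycle V E" unfolding has_cycle_def
  proof (intro exI conjI)
    show "3 \<le> length c" using len ij by simp
    show "distinct c" using d by (simp add: c_def)
    show "set c \<subseteq> V" using s by (metis c_def order_trans set_drop_subset set_take_subset)
    show "\<forall>k. Suc k < length c \<longrightarrow> adj E (c ! k) (c ! Suc k)"
    proof (intro allI impI)
      fix k assume k: "Suc k < length c"
      then have "Suc (i + k) < length cs" using len ij by simp
      then have "adj E (cs ! (i+k)) (cs ! Suc (i+k))" using w by (simp add: walk_def)
      then show "adj E (c ! k) (c ! Suc k)" using nth k len by simp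
    qed
    have "c \<noteq> []" using len ij by auto
    then have "last c = c ! (j - i)" "hd c = c ! 0" using len by (simp_all add: last_conv_nth hd_conv_nth)
    then have "last c = cs ! j" "hd c = cs ! i" using nth ij by auto
    then show "adj E (last c) (hd c)" using a by simp
  qed
  then show False using no_cycle by simp
qed

end



lemma walk_snoc:
  assumes "walk E cs" "cs \<noteq> []" "adj E (last cs) y"
  shows "walk E (cs @ [y])"
  unfolding walk_def
proof (intro allI impI)
  fix i assume i: "Suc i < length (cs @ [y])"
  show "adj E ((cs @ [y]) ! i) ((cs @ [y]) ! Suc i)"
  proof (cases "Suc i < length cs")
    case True
    then show ?thesis using assms(1) by (simp add: walk_def nth_append)
  next
    case False
    then have "i = length cs - 1" using i by simp
    then show ?thesis using assms(2,3) by (simp add: nth_append last_conv_nth)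
  qed
qed

lemma pe_iff: "i < k \<Longrightarrow> j < k \<Longrightarrow> {i, j} \<in> path_edges k \<longleftrightarrow> (j = Suc i \<or> i = Suc j)"
  unfolding path_edges_def by (auto simp: doubleton_eq_iff)

lemma se_iff: "{a, b} \<in> star_edges n \<longleftrightarrow> (a = 0 \<and> 0 < b \<and> b < n) \<or> (b = 0 \<and> 0 < a \<and> a < n)"
  unfolding star_edges_def by (auto simp: doubleton_eq_iff)

lemma se_single: "{a} \<notin> star_edges n"
  unfolding star_edges_def by (auto simp: doubleton_eq_iff)

context T begin

lemma cyc3: assumes "distinct [a,b,c]" "adj E a b" "adj E b c" "adj E c a" shows False
  using path_chord[of "[a,b,c]" 0 2] assms adj_V by auto

lemma cyc4: assumes "distinct [a,b,c,d]" "adj E a b" "adj E b c" "adj E c d" "adj E d a" shows False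
  using path_chord[of "[a,b,c,d]" 0 3] assms adj_V by auto

lemma cyc6: assumes "distinct [a,b,c,d,e,f]" "adj E a b" "adj E b c" "adj E c d" "adj E d e"
   "adj E e f" "adj E f a" shows False
  using path_chord[of "[a,b,c,d,e,f]" 0 5] assms adj_V by auto

lemma Dmax_ge: "w \<in> V \<Longrightarrow> card {l \<in> V. is_leaf V E l \<and> adj E w l} \<le> Dmax V E"
  unfolding Dmax_def using finV by (intro Max_ge) auto

lemma exists_leaf: "\<exists>x y. y \<in> V \<and> is_leaf V E x \<and> adj E y x"
proof -
  define P where "P = {cs. distinct cs \<and> set cs \<subseteq> V \<and> cs \<noteq> [] \<and> walk E cs}"
  have "P \<subseteq> {xs. set xs \<subseteq> V \<and> length xs \<le> card V}"
    unfolding P_def using finV by (auto simp flip: distinct_card intro: card_mono)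
  then have finP: "finite P" using finite_lists_length_le[OF finV] finite_subset by blast
  obtain x0 where "x0 \<in> V" using big by fastforce
  then have "[x0] \<in> P" by (simp add: P_def)
  then have ne: "length ` P \<noteq> {}" by blast
  define m where "m = Max (length ` P)"
  have "m \<in> length ` P" unfolding m_def using finP ne by (intro Max_in) auto
  then obtain cs where cs: "cs \<in> P" "length cs = m" by blast
  have mx: "\<And>c. c \<in> P \<Longrightarrow> length c \<le> length cs" unfolding cs(2) m_def using finP by (intro Max_ge) auto
  define k where "k = length cs"
  have csP: "distinct cs" "set cs \<subseteq> V" "cs \<noteq> []" "walk E cs" using cs(1) by (auto simp: P_def)
  define x where "x = last cs"
  have xk: "x = cs ! (k - 1)" using csP(3) by (simp add: x_def k_def last_conv_nth)
  have xV: "x \<in> V" using csP x_def by auto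
  have nb: "\<And>y. adj E x y \<Longrightarrow> k \<ge> 2 \<and> y = cs ! (k - 2)"
  proof -
    fix y assume a: "adj E x y"
    have "y \<in> set cs"
    proof (rule ccontr)
      assume "y \<notin> set cs"
      then have "cs @ [y] \<in> P" using csP a adj_V walk_snoc[of E cs y] by (auto simp: P_def x_def)
      then show False using mx by fastforce
    qed
    then obtain i where i: "i < k" "y = cs ! i" by (auto simp: in_set_conv_nth k_def)
    have "i \<noteq> k - 1" using a adj_irrefl xk i by auto
    moreover have "\<not> i + 2 \<le> k - 1"
    proof
      assume "i + 2 \<le> k - 1"
      moreover have "k - 1 < length cs" using csP(3) k_def by simp
      ultimately show False using path_chord[OF csP(1,2,4), of i "k - 1"] a i xk by auto
    qed
    ultimately show "k \<ge> 2 \<and> y = cs ! (k - 2)" using i by (cases "i = k - 2") auto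
  qed
  obtain y0 where y0: "adj E x y0" using has_neighbor xV by blast
  have e: "y0 = cs ! (k - 2)" using nb[OF y0] by simp
  have "{u \<in> V. adj E x u} = {y0}"
  proof
    show "{u \<in> V. adj E x u} \<subseteq> {y0}"
    proof
      fix u assume "u \<in> {u \<in> V. adj E x u}"
      then have "adj E x u" by simp
      then have "u = cs ! (k - 2)" using nb[of u] by blast
      then show "u \<in> {y0}" using e by simp
    qed
    show "{y0} \<subseteq> {u \<in> V. adj E x u}" using y0 adj_V[OF y0] by simp
  qed
  then have "is_leaf V E x" using xV by (simp add: is_leaf_def degree_def)
  then show ?thesis using adj_sym[OF y0] adj_V[OF y0] by blast
qed

lemma Dmax_pos: "Dmax V E \<ge> 1"
proof -
  obtain x y where h: "y \<in> V" "is_leaf V E x" "adj E y x" using exists_leaf by blast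
  then have "x \<in> {l \<in> V. is_leaf V E l \<and> adj E y l}" using adj_V by auto
  then have "card {l \<in> V. is_leaf V E l \<and> adj E y l} \<ge> 1" using finV
    by (metis (no_types, lifting) One_nat_def Suc_leI card_gt_0_iff emptyE finite_subset mem_Collect_eq subsetI)
  then show ?thesis using Dmax_ge[OF h(1)] by simp
qed

lemma path_iso:
  assumes d: "distinct xs" and s: "set xs = V" and w: "walk E xs"
  shows "graph_iso V E {0..<length xs} (path_edges (length xs))"
proof -
  define k where "k = length xs"
  have g: "bij_betw ((!) xs) {..<k} V" using bij_betw_nth[OF d] s k_def by simp
  define f where "f = inv_into {..<k} ((!) xs)"
  have bf: "bij_betw f V {..<k}" using bij_betw_inv_into[OF g] f_def by simp
  have fx: "\<And>x. x \<in> V \<Longrightarrow> xs ! (f x) = x \<and> f x < k"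
    using g bf unfolding f_def by (auto simp: bij_betw_def f_inv_into_f inv_into_into)
  show ?thesis unfolding graph_iso_def
  proof (intro exI conjI ballI)
    show "bij_betw f V {0..<length xs}" using bf k_def by (simp add: atLeast0LessThan)
    fix x y assume xy: "x \<in> V" "y \<in> V"
    define i where "i = f x"
    define j where "j = f y"
    have ij: "xs ! i = x" "i < k" "xs ! j = y" "j < k" using fx xy i_def j_def by auto
    have "{x, y} \<in> E \<longleftrightarrow> (j = Suc i \<or> i = Suc j)"
    proof
      assume e: "{x, y} \<in> E"
      then have a: "adj E x y" by (simp add: adj_def)
      show "j = Suc i \<or> i = Suc j"
      proof (rule ccontr)
        assume nn: "\<not> (j = Suc i \<or> i = Suc j)"
        have "i \<noteq> j" using a ij adj_irrefl by auto
        then have "i + 2 \<le> j \<or> j + 2 \<le> i" using nn by auto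
        then show False
        proof
          assume "i + 2 \<le> j"
          then show False using path_chord[OF d _ w, of i j] s ij adj_sym[OF a] k_def by auto
        next
          assume "j + 2 \<le> i"
          then show False using path_chord[OF d _ w, of j i] s ij a k_def by auto
        qed
      qed
    next
      assume "j = Suc i \<or> i = Suc j"
      then show "{x, y} \<in> E"
      proof
        assume "j = Suc i"
        then have "adj E x y" using w ij k_def by (auto simp: walk_def)
        then show ?thesis by (simp add: adj_def)
      next
        assume "i = Suc j"
        then have "adj E y x" using w ij k_def by (auto simp: walk_def)
        then show ?thesis by (simp add: adj_def insert_commute)
      qed
    qed
    then show "{x, y} \<in> E \<longleftrightarrow> {f x, f y} \<in> path_edges (length xs)"
      using pe_iff[of i k j] ij i_def j_def k_def by simp
  qed
qed

lemma star_iso: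
  assumes c: "c \<in> V" and u: "\<forall>x\<in>V. x \<noteq> c \<longrightarrow> adj E c x"
  shows "graph_iso V E {0..<card V} (star_edges (card V))"
proof -
  define n where "n = card V"
  have "card (V - {c}) = card {1..<n}" using c finV n_def by simp
  then obtain g where g: "bij_betw g (V - {c}) {1..<n}" using bij_betw_iff_card finV by blast
  define f where "f = g(c := 0)"
  have b1: "bij_betw f (V - {c}) {1..<n}" using g unfolding f_def
    by (rule bij_betw_cong[THEN iffD1, rotated]) auto
  have b2: "bij_betw f {c} {0}" by (simp add: f_def)
  have "bij_betw f ({c} \<union> (V - {c})) ({0} \<union> {1..<n})"
    by (rule bij_betw_combine[OF b2 b1]) auto
  moreover have "{c} \<union> (V - {c}) = V" using c by auto
  moreover have "{0} \<union> {1..<n} = {0..<n}" using big n_def by auto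
  ultimately have bf: "bij_betw f V {0..<n}" by simp
  have fr: "\<And>x. x \<in> V \<Longrightarrow> x \<noteq> c \<Longrightarrow> f x \<in> {1..<n}" using b1 by (auto simp: bij_betw_def)
  have fc: "f c = 0" by (simp add: f_def)
  show ?thesis unfolding graph_iso_def n_def[symmetric]
  proof (intro exI conjI ballI)
    show "bij_betw f V {0..<n}" by (rule bf)
    fix x y assume xy: "x \<in> V" "y \<in> V"
    show "{x, y} \<in> E \<longleftrightarrow> {f x, f y} \<in> star_edges n"
    proof (cases "x = c")
      case True
      show ?thesis
      proof (cases "y = c")
        case True
        then show ?thesis using \<open>x = c\<close> adj_irrefl[of c] fc se_single[of "0::nat" n] by (simp add: adj_def)
      next
        case False
        then show ?thesis using \<open>x = c\<close> u xy fr[of y] fc by (auto simp: se_iff adj_def)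
      qed
    next
      case False
      show ?thesis
      proof (cases "y = c")
        case True
        then show ?thesis using \<open>x \<noteq> c\<close> u xy fr[of x] fc by (auto simp: se_iff adj_def insert_commute)
      next
        case False
        have "\<not> adj E x y"
        proof
          assume a: "adj E x y"
          then have "x \<noteq> y" using adj_irrefl by auto
          have "adj E c y" using u xy False by blast
          then have "adj E y c" by (rule adj_sym)
          then show False using cyc3[of c x y] a u xy \<open>x \<noteq> c\<close> False \<open>x \<noteq> y\<close> by auto
        qed
        then show ?thesis using fr[of x] fr[of y] xy \<open>x \<noteq> c\<close> False by (auto simp: se_iff adj_def)
      qed
    qed
  qed
qed

end



definition twin :: "'a set \<Rightarrow> 'a set set \<Rightarrow> 'a \<Rightarrow> 'a \<Rightarrow> bool" where
  "twin V E u v \<longleftrightarrow> (\<forall>z\<in>V - {u, v}. adj E u z = adj E v z)"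

definition anti :: "'a set \<Rightarrow> 'a set set \<Rightarrow> 'a \<Rightarrow> 'a \<Rightarrow> bool" where
  "anti V E u v \<longleftrightarrow> (\<forall>z\<in>V - {u, v}. adj E u z \<noteq> adj E v z)"

context T begin

lemma three_outside:
  assumes "u \<in> V" "v \<in> V" obtains z where "z \<in> V" "z \<noteq> u" "z \<noteq> v"
proof -
  have "card (V - {u, v}) \<ge> 2"
  proof -
    have "card (V - {u, v}) \<ge> card V - card {u, v}" by (rule diff_card_le_card_Diff) (simp)
    moreover have "card {u, v} \<le> 2" by (simp add: card_insert_if)
    ultimately show ?thesis using big by linarith
  qed
  then have "V - {u, v} \<noteq> {}" by (metis card.empty not_numeral_le_zero)
  then show ?thesis using that by blast
qed

lemma odd_char:
  assumes V: "u \<in> V" "v \<in> V" "x \<in> V" "y \<in> V"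
    and d: "u \<noteq> v" "x \<noteq> y" "x \<noteq> u" "x \<noteq> v" "y \<noteq> u" "y \<noteq> v"
    and no: "\<not> odd_set V E {u, v}"
  shows "(adj E u x \<noteq> adj E v x) = (adj E u y \<noteq> adj E v y)"
proof -
  have "\<not> odd_pair V E {u, v} {x, y}" using no by (simp add: odd_set_def)
  then have ev: "even (card (edges_between E {u, v} {x, y}))"
    using V d by (simp add: odd_pair_def)
  have eq: "edges_between E {u, v} {x, y} =
     (if adj E u x then {{u, x}} else {}) \<union> (if adj E u y then {{u, y}} else {}) \<union>
     (if adj E v x then {{v, x}} else {}) \<union> (if adj E v y then {{v, y}} else {})"
    unfolding edges_between_def adj_def by auto
  show ?thesis using ev d unfolding eq
    by (cases "adj E u x"; cases "adj E u y"; cases "adj E v x"; cases "adj E v y")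
       (auto simp: card_insert_if doubleton_eq_iff)
qed

lemma twin_or_anti:
  assumes "u \<in> V" "v \<in> V" "u \<noteq> v" "{u, v} \<notin> Lambda_edges V E"
  shows "twin V E u v \<or> anti V E u v"
proof (rule ccontr)
  assume nn: "\<not> (twin V E u v \<or> anti V E u v)"
  have no: "\<not> odd_set V E {u, v}" using assms by (simp add: Lambda_edges_def)
  obtain z0 where z0: "z0 \<in> V - {u, v}" "adj E u z0 \<noteq> adj E v z0" using nn by (auto simp: twin_def)
  have "anti V E u v" unfolding anti_def
  proof
    fix z assume z: "z \<in> V - {u, v}"
    show "adj E u z \<noteq> adj E v z"
    proof (cases "z = z0")
      case True then show ?thesis using z0 by simp
    next
      case False
      then show ?thesis using odd_char[of u v z0 z] z z0 assms no by auto
    qed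
  qed
  then show False using nn by simp
qed

lemma twin_struct:
  assumes uv: "u \<in> V" "v \<in> V" "u \<noteq> v" and t: "twin V E u v"
  shows "\<exists>w. (\<forall>x. adj E u x \<longleftrightarrow> x = w) \<and> (\<forall>x. adj E v x \<longleftrightarrow> x = w)"
proof -
  have tw: "\<And>z. z \<in> V \<Longrightarrow> z \<noteq> u \<Longrightarrow> z \<noteq> v \<Longrightarrow> adj E u z = adj E v z"
    using t by (auto simp: twin_def)
  have nuv: "\<not> adj E u v"
  proof
    assume a: "adj E u v"
    have h1: "\<forall>x. adj E u x \<longrightarrow> x = v"
    proof (intro allI impI)
      fix x assume ax: "adj E u x"
      show "x = v"
      proof (rule ccontr)
        assume "x \<noteq> v"
        moreover have "x \<noteq> u" using ax adj_irrefl by auto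
        moreover have "x \<in> V" using adj_V[OF ax] by simp
        ultimately have "adj E v x" using tw ax by blast
        then show False using cyc3[of u v x] a adj_sym[OF ax] \<open>x \<noteq> v\<close> \<open>x \<noteq> u\<close> uv by auto
      qed
    qed
    have h2: "\<forall>x. adj E v x \<longrightarrow> x = u"
    proof (intro allI impI)
      fix x assume ax: "adj E v x"
      show "x = u"
      proof (rule ccontr)
        assume "x \<noteq> u"
        moreover have "x \<noteq> v" using ax adj_irrefl by auto
        moreover have "x \<in> V" using adj_V[OF ax] by simp
        ultimately have "adj E u x" using tw ax by blast
        then have "adj E x u" by (rule adj_sym)
        then show False using cyc3[of u v x] a ax \<open>x \<noteq> v\<close> \<open>x \<noteq> u\<close> uv by auto
      qed
    qed
    obtain z where z: "z \<in> V" "z \<noteq> u" "z \<noteq> v" using three_outside uv by blast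
    show False
      by (rule closed_set[of u "{u, v}" z]) (use h1 h2 z uv in auto)
  qed
  obtain w where w: "adj E u w" using has_neighbor uv by blast
  have wV: "w \<in> V" "w \<noteq> u" "w \<noteq> v" using adj_V[OF w] adj_irrefl w nuv by auto
  have vw: "adj E v w" using tw[OF wV] w by simp
  have hu: "\<forall>x. adj E u x \<longleftrightarrow> x = w"
  proof (intro allI iffI)
    fix x assume ax: "adj E u x"
    show "x = w"
    proof (rule ccontr)
      assume "x \<noteq> w"
      moreover have "x \<noteq> u" using ax adj_irrefl by auto
      moreover have "x \<noteq> v" using ax nuv by auto
      moreover have "x \<in> V" using adj_V[OF ax] by simp
      ultimately have "adj E v x" using tw ax by blast
      then show False using cyc4[of u w v x] w adj_sym[OF vw] adj_sym[OF ax] \<open>x \<noteq> w\<close> \<open>x \<noteq> u\<close> \<open>x \<noteq> v\<close> wV uv by auto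
    qed
  next
    fix x assume "x = w" then show "adj E u x" using w by simp
  qed
  have hv: "\<forall>x. adj E v x \<longleftrightarrow> x = w"
  proof (intro allI iffI)
    fix x assume ax: "adj E v x"
    have "x \<noteq> u" using adj_sym[OF ax] nuv by blast
    moreover have "x \<noteq> v" using ax adj_irrefl by auto
    moreover have "x \<in> V" using adj_V[OF ax] by simp
    ultimately have "adj E u x" using tw ax by blast
    then show "x = w" using hu by blast
  next
    fix x assume "x = w" then show "adj E v x" using vw by simp
  qed
  show ?thesis using hu hv by blast
qed

end



lemma anti_sym: "anti V E u v \<Longrightarrow> anti V E v u"
  unfolding anti_def by (auto simp: insert_commute)

locale T2 = T +
  assumes nstar: "\<not> graph_iso V E {0..<card V} (star_edges (card V))"
    and nP4: "\<not> graph_iso V E {0..<4} (path_edges 4)"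
    and nP5: "\<not> graph_iso V E {0..<5} (path_edges 5)"
    and nP6: "\<not> graph_iso V E {0..<6} (path_edges 6)"
begin

lemma no_univ: "c \<in> V \<Longrightarrow> \<forall>x\<in>V. x \<noteq> c \<longrightarrow> adj E c x \<Longrightarrow> False"
  using star_iso nstar by blast

lemma anti_unique:
  assumes V: "u \<in> V" "v1 \<in> V" "v2 \<in> V" and d: "u \<noteq> v1" "u \<noteq> v2" "v1 \<noteq> v2"
    and a1: "anti V E u v1" and a2: "anti V E u v2"
  shows False
proof -
  have A1: "\<And>z. z \<in> V \<Longrightarrow> z \<noteq> u \<Longrightarrow> z \<noteq> v1 \<Longrightarrow> adj E u z \<noteq> adj E v1 z" using a1 by (auto simp: anti_def)
  have A2: "\<And>z. z \<in> V \<Longrightarrow> z \<noteq> u \<Longrightarrow> z \<noteq> v2 \<Longrightarrow> adj E u z \<noteq> adj E v2 z" using a2 by (auto simp: anti_def)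
  have same: "\<And>z. z \<in> V \<Longrightarrow> z \<noteq> u \<Longrightarrow> z \<noteq> v1 \<Longrightarrow> z \<noteq> v2 \<Longrightarrow> adj E v1 z = adj E v2 z"
    using A1 A2 by blast
  have e1: "adj E u v2 \<noteq> adj E v1 v2" using A1[of v2] V d by auto
  have e2: "adj E u v1 \<noteq> adj E v2 v1" using A2[of v1] V d by auto
  show False
  proof (cases "adj E v1 v2")
    case True
    have t2: "adj E v2 v1" using True by (rule adj_sym)
    have n1: "\<not> adj E u v1" "\<not> adj E u v2" using e1 e2 True t2 by auto
    have h1: "\<forall>x. adj E v1 x \<longrightarrow> x = v2"
    proof (intro allI impI)
      fix x assume ax: "adj E v1 x"
      show "x = v2"
      proof (rule ccontr)
        assume "x \<noteq> v2"
        moreover have "x \<noteq> u" using adj_sym[OF ax] n1 by auto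
        moreover have "x \<noteq> v1" using ax adj_irrefl by auto
        moreover have "x \<in> V" using adj_V[OF ax] by simp
        ultimately have "adj E v2 x" using same ax by blast
        moreover have "adj E x v1" using ax by (rule adj_sym)
        ultimately show False using cyc3[of v1 v2 x] True \<open>x \<noteq> v2\<close> \<open>x \<noteq> v1\<close> d by auto
      qed
    qed
    have h2: "\<forall>x. adj E v2 x \<longrightarrow> x = v1"
    proof (intro allI impI)
      fix x assume ax: "adj E v2 x"
      show "x = v1"
      proof (rule ccontr)
        assume "x \<noteq> v1"
        moreover have "x \<noteq> u" using adj_sym[OF ax] n1 by auto
        moreover have "x \<noteq> v2" using ax adj_irrefl by auto
        moreover have "x \<in> V" using adj_V[OF ax] by simp
        ultimately have "adj E v1 x" using same ax by blast
        moreover have "adj E x v2" using ax by (rule adj_sym)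
        ultimately show False using cyc3[of v1 x v2] t2 \<open>x \<noteq> v2\<close> \<open>x \<noteq> v1\<close> d by auto
      qed
    qed
    obtain z where z: "z \<in> V" "z \<noteq> v1" "z \<noteq> v2" using three_outside V by blast
    show False
      by (rule closed_set[of v1 "{v1, v2}" z]) (use h1 h2 z V in auto)
  next
    case False
    have nf: "\<not> adj E v2 v1" using False adj_sym[of E v2 v1] by blast
    have n1: "adj E u v1" "adj E u v2" using e1 e2 False nf by blast+
    have h1: "\<forall>x. adj E v1 x \<longrightarrow> x = u"
    proof (intro allI impI)
      fix x assume ax: "adj E v1 x"
      show "x = u"
      proof (rule ccontr)
        assume "x \<noteq> u"
        moreover have "x \<noteq> v2" using ax False by auto
        moreover have "x \<noteq> v1" using ax adj_irrefl by auto
        moreover have "x \<in> V" using adj_V[OF ax] by simp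
        ultimately have "adj E v2 x" using same ax by blast
        moreover have "adj E x v2" using calculation by (rule adj_sym)
        moreover have "adj E v2 u" using n1(2) by (rule adj_sym)
        ultimately show False using cyc4[of v1 x v2 u] ax n1 \<open>x \<noteq> u\<close> \<open>x \<noteq> v2\<close> \<open>x \<noteq> v1\<close> d by auto
      qed
    qed
    have "\<forall>x\<in>V. x \<noteq> u \<longrightarrow> adj E u x"
    proof (intro ballI impI)
      fix x assume x: "x \<in> V" "x \<noteq> u"
      show "adj E u x"
      proof (cases "x = v1")
        case True then show ?thesis using n1 by simp
      next
        case False
        have "\<not> adj E v1 x" using h1 x by blast
        then show ?thesis using A1[OF x(1) x(2) False] by simp
      qed
    qed
    then show False using no_univ V by blast
  qed
qed

lemma anti_twin_excl:
  assumes V: "u \<in> V" "v \<in> V" "v' \<in> V" and d: "u \<noteq> v" "u \<noteq> v'"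
    and a: "anti V E u v" and t: "twin V E u v'"
  shows False
proof -
  obtain w where w: "\<forall>x. adj E u x \<longleftrightarrow> x = w" "\<forall>x. adj E v' x \<longleftrightarrow> x = w"
    using twin_struct[OF V(1,3) d(2) t] by blast
  have A: "\<And>z. z \<in> V \<Longrightarrow> z \<noteq> u \<Longrightarrow> z \<noteq> v \<Longrightarrow> adj E u z \<noteq> adj E v z" using a by (auto simp: anti_def)
  have vv: "v \<noteq> v'"
  proof
    assume "v = v'"
    obtain z where z: "z \<in> V" "z \<noteq> u" "z \<noteq> v" using three_outside V by blast
    then show False using A t \<open>v = v'\<close> by (auto simp: twin_def)
  qed
  have vw: "v' \<noteq> w" using w(2) adj_irrefl by blast
  then have "\<not> adj E u v'" using w(1) by blast
  then have "adj E v v'" using A[OF V(3)] d vv by blast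
  then have "adj E v' v" by (rule adj_sym)
  then have vw2: "v = w" using w(2) by blast
  have "adj E u w" using w(1) by blast
  then have uw: "adj E w u" by (rule adj_sym)
  have "\<forall>x\<in>V. x \<noteq> w \<longrightarrow> adj E w x"
  proof (intro ballI impI)
    fix x assume x: "x \<in> V" "x \<noteq> w"
    show "adj E w x"
    proof (cases "x = u")
      case True then show ?thesis using uw by simp
    next
      case False
      have "\<not> adj E u x" using w(1) x by blast
      then show ?thesis using A[OF x(1) False] x vw2 by auto
    qed
  qed
  moreover have "w \<in> V" using vw2 V by simp
  ultimately show False using no_univ by blast
qed

lemma D2_set:
  assumes c: "c \<in> V" and A: "A \<subseteq> V" "card A \<ge> 2" and l: "\<And>w. w \<in> A \<Longrightarrow> \<forall>x. adj E w x \<longleftrightarrow> x = c"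
  shows "2 \<le> Dmax V E"
proof -
  have "A \<subseteq> {l \<in> V. is_leaf V E l \<and> adj E c l}"
  proof
    fix w assume w: "w \<in> A"
    have "{x \<in> V. adj E w x} = {c}" using l[OF w] c by auto
    then have "is_leaf V E w" using w A by (auto simp: is_leaf_def degree_def)
    moreover have "adj E w c" using l[OF w] by blast
    then have "adj E c w" by (rule adj_sym)
    ultimately show "w \<in> {l \<in> V. is_leaf V E l \<and> adj E c l}" using w A by auto
  qed
  then have "card A \<le> card {l \<in> V. is_leaf V E l \<and> adj E c l}" using finV by (intro card_mono) auto
  then show ?thesis using Dmax_ge[OF c] A by linarith
qed

end



context T begin

lemma adj_case_leaf:
  assumes V: "u \<in> V" "v \<in> V" and d: "u \<noteq> v" and uv: "adj E u v" and a: "anti V E u v"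
    and uw: "adj E u w" and wv: "w \<noteq> v"
  shows "\<forall>x. adj E w x \<longleftrightarrow> x = u"
proof (intro allI iffI)
  fix x assume wx: "adj E w x"
  have A: "\<And>z. z \<in> V \<Longrightarrow> z \<noteq> u \<Longrightarrow> z \<noteq> v \<Longrightarrow> adj E u z \<noteq> adj E v z" using a by (auto simp: anti_def)
  have wV: "w \<in> V" "w \<noteq> u" using adj_V[OF uw] adj_irrefl uw by auto
  have nvw: "\<not> adj E v w" using A[OF wV(1) wV(2) wv] uw by simp
  show "x = u"
  proof (rule ccontr)
    assume xu: "x \<noteq> u"
    have xv: "x \<noteq> v"
    proof
      assume "x = v" then have "adj E w v" using wx by simp
      then have "adj E v w" by (rule adj_sym)
      then show False using nvw by simp
    qed
    have xw: "x \<noteq> w" using wx adj_irrefl by auto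
    have xV: "x \<in> V" using adj_V[OF wx] by simp
    have xu': "adj E x w" using wx by (rule adj_sym)
    show False
    proof (cases "adj E u x")
      case True
      then have "adj E x u" by (rule adj_sym)
      then show False using cyc3[of u w x] uw wx xu xw wV by auto
    next
      case False
      then have vx: "adj E v x" using A[OF xV xu xv] by simp
      then have "adj E x v" by (rule adj_sym)
      moreover have "adj E v u" using uv by (rule adj_sym)
      ultimately show False using cyc4[of u w x v] uw wx xu xw xv wV wv d by auto
    qed
  qed
next
  fix x assume "x = u"
  then show "adj E w x" using uw adj_sym[OF uw] by simp
qed

lemma nonadj_nb:
  assumes V: "u \<in> V" "v \<in> V" and d: "u \<noteq> v" and uv: "\<not> adj E u v" and a: "anti V E u v"
    and uw: "adj E u w" and wx: "adj E w x" and xu: "x \<noteq> u"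
  shows "adj E v x"
proof -
  have A: "\<And>z. z \<in> V \<Longrightarrow> z \<noteq> u \<Longrightarrow> z \<noteq> v \<Longrightarrow> adj E u z \<noteq> adj E v z" using a by (auto simp: anti_def)
  have wV: "w \<in> V" "w \<noteq> u" "w \<noteq> v" using adj_V[OF uw] adj_irrefl uw uv by auto
  have nvw: "\<not> adj E v w" using A[OF wV(1) wV(2) wV(3)] uw by simp
  have xv: "x \<noteq> v"
  proof
    assume "x = v" then have "adj E w v" using wx by simp
    then have "adj E v w" by (rule adj_sym)
    then show False using nvw by simp
  qed
  have xw: "x \<noteq> w" using wx adj_irrefl by auto
  have xV: "x \<in> V" using adj_V[OF wx] by simp
  have "\<not> adj E u x"
  proof
    assume "adj E u x"
    then have "adj E x u" by (rule adj_sym)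
    then show False using cyc3[of u w x] uw wx xu xw wV by auto
  qed
  then show ?thesis using A[OF xV xu xv] by simp
qed

end




lemma card_le1_cases: "finite S \<Longrightarrow> card S \<le> 1 \<Longrightarrow> S = {} \<or> (\<exists>x. S = {x})"
  by (metis One_nat_def card.empty card_1_singletonE le_Suc_eq le_zero_eq card_0_eq)

context T2 begin

lemma anti_D2_adj:
  assumes V: "u \<in> V" "v \<in> V" and d: "u \<noteq> v" and uv: "adj E u v" and a: "anti V E u v"
  shows "2 \<le> Dmax V E"
proof -
  define A where "A = {w \<in> V. adj E u w} - {v}"
  define B where "B = {w \<in> V. adj E v w} - {u}"
  have vu: "adj E v u" using uv by (rule adj_sym)
  have lA: "\<And>w. w \<in> A \<Longrightarrow> \<forall>x. adj E w x \<longleftrightarrow> x = u"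
    using adj_case_leaf[OF V d uv a] unfolding A_def by blast
  have lB: "\<And>w. w \<in> B \<Longrightarrow> \<forall>x. adj E w x \<longleftrightarrow> x = v"
    using adj_case_leaf[OF V(2) V(1) d[symmetric] vu anti_sym[OF a]] unfolding B_def by blast
  have AV: "A \<subseteq> V" "B \<subseteq> V" unfolding A_def B_def by auto
  have fin: "finite A" "finite B" using AV finV finite_subset by auto
  show ?thesis
  proof (cases "card A \<ge> 2 \<or> card B \<ge> 2")
    case True
    then show ?thesis
    proof
      assume "card A \<ge> 2" then show ?thesis using D2_set[OF V(1) AV(1) _ lA] by blast
    next
      assume "card B \<ge> 2" then show ?thesis using D2_set[OF V(2) AV(2) _ lB] by blast
    qed
  next
    case False
    have Aa: "\<And>z. z \<in> V - {u, v} \<Longrightarrow> adj E u z \<noteq> adj E v z" using a by (auto simp: anti_def)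
    have cover: "V \<subseteq> {u, v} \<union> A \<union> B"
    proof
      fix z assume z: "z \<in> V"
      show "z \<in> {u, v} \<union> A \<union> B"
      proof (cases "z = u \<or> z = v")
        case True then show ?thesis by auto
      next
        case False
        then have "adj E u z \<or> adj E v z" using Aa[of z] z by auto
        then show ?thesis using z False unfolding A_def B_def by auto
      qed
    qed
    have "card V \<le> card ({u, v} \<union> A \<union> B)" using cover fin by (intro card_mono) auto
    also have "\<dots> \<le> card {u, v} + card A + card B" using fin
      by (metis (no_types, lifting) add_le_mono1 card_Un_le dual_order.trans)
    also have "\<dots> \<le> 2 + card A + card B" by (simp add: card_insert_if)
    finally have "card A = 1" "card B = 1" using False big by linarith+
    then obtain a0 b0 where ab: "A = {a0}" "B = {b0}" by (metis card_1_singletonE)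
    have a0: "a0 \<in> V" "adj E u a0" "a0 \<noteq> v" "a0 \<noteq> u" using ab adj_irrefl unfolding A_def by auto
    have b0: "b0 \<in> V" "adj E v b0" "b0 \<noteq> u" "b0 \<noteq> v" using ab adj_irrefl unfolding B_def by auto
    have "a0 \<noteq> b0"
    proof
      assume "a0 = b0"
      then have "\<forall>x. adj E a0 x \<longleftrightarrow> x = v" using lB ab by auto
      moreover have "\<forall>x. adj E a0 x \<longleftrightarrow> x = u" using lA ab by auto
      ultimately show False using d by blast
    qed
    have au: "adj E a0 u" using a0(2) by (rule adj_sym)
    have "set [a0, u, v, b0] = V" using cover ab a0 b0 V by auto
    moreover have "distinct [a0, u, v, b0]" using a0 b0 d \<open>a0 \<noteq> b0\<close> by auto
    moreover have "walk E [a0, u, v, b0]" using au uv b0 by simp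
    ultimately have "graph_iso V E {0..<length [a0, u, v, b0]} (path_edges (length [a0, u, v, b0]))"
      using path_iso by blast
    moreover have "length [a0, u, v, b0] = 4" by simp
    ultimately have "graph_iso V E {0..<4} (path_edges 4)" by metis
    then show ?thesis using nP4 by simp
  qed
qed

end



context T2 begin

lemma anti_D2_nonadj:
  assumes V: "u \<in> V" "v \<in> V" and d: "u \<noteq> v" and uv: "\<not> adj E u v" and a: "anti V E u v"
  shows "2 \<le> Dmax V E"
proof -
  define A where "A = {w \<in> V. adj E u w}"
  define B where "B = {w \<in> V. adj E v w}"
  have vu: "\<not> adj E v u" using uv adj_sym[of E v u] by blast
  have av: "anti V E v u" using a by (rule anti_sym)
  have Aa: "\<And>z. z \<in> V \<Longrightarrow> z \<noteq> u \<Longrightarrow> z \<noteq> v \<Longrightarrow> adj E u z \<noteq> adj E v z" using a by (auto simp: anti_def)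
  have Amem: "\<And>w. w \<in> A \<Longrightarrow> w \<in> V \<and> w \<noteq> u \<and> w \<noteq> v \<and> adj E u w \<and> \<not> adj E v w"
  proof -
    fix w assume w: "w \<in> A"
    then have "w \<in> V" "adj E u w" unfolding A_def by auto
    moreover have "w \<noteq> u" using \<open>adj E u w\<close> adj_irrefl by auto
    moreover have "w \<noteq> v" using \<open>adj E u w\<close> uv by auto
    ultimately show "w \<in> V \<and> w \<noteq> u \<and> w \<noteq> v \<and> adj E u w \<and> \<not> adj E v w" using Aa by blast
  qed
  have Bmem: "\<And>w. w \<in> B \<Longrightarrow> w \<in> V \<and> w \<noteq> u \<and> w \<noteq> v \<and> adj E v w \<and> \<not> adj E u w"
  proof -
    fix w assume w: "w \<in> B"
    then have "w \<in> V" "adj E v w" unfolding B_def by auto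
    moreover have "w \<noteq> v" using \<open>adj E v w\<close> adj_irrefl by auto
    moreover have "w \<noteq> u" using \<open>adj E v w\<close> vu by auto
    ultimately show "w \<in> V \<and> w \<noteq> u \<and> w \<noteq> v \<and> adj E v w \<and> \<not> adj E u w" using Aa by blast
  qed
  have cover: "V = {u, v} \<union> A \<union> B"
  proof
    show "V \<subseteq> {u, v} \<union> A \<union> B"
    proof
      fix z assume z: "z \<in> V"
      show "z \<in> {u, v} \<union> A \<union> B"
      proof (cases "z = u \<or> z = v")
        case True then show ?thesis by auto
      next
        case False
        then have "adj E u z \<or> adj E v z" using Aa[of z] z by auto
        then show ?thesis using z False unfolding A_def B_def by auto
      qed
    qed
    show "{u, v} \<union> A \<union> B \<subseteq> V" using V unfolding A_def B_def by auto
  qed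
  have nbA: "\<And>w x. w \<in> A \<Longrightarrow> adj E w x \<Longrightarrow> x \<noteq> u \<Longrightarrow> x \<in> B"
  proof -
    fix w x assume "w \<in> A" "adj E w x" "x \<noteq> u"
    then have "adj E v x" using nonadj_nb[OF V d uv a] Amem by blast
    then show "x \<in> B" using adj_V[of v x] unfolding B_def by blast
  qed
  have nbB: "\<And>w x. w \<in> B \<Longrightarrow> adj E w x \<Longrightarrow> x \<noteq> v \<Longrightarrow> x \<in> A"
  proof -
    fix w x assume "w \<in> B" "adj E w x" "x \<noteq> v"
    then have "adj E u x" using nonadj_nb[OF V(2) V(1) d[symmetric] vu av] Bmem by blast
    then show "x \<in> A" using adj_V[of u x] unfolding A_def by blast
  qed
  have uniq: "\<And>a1 a2 b1 b2. a1 \<in> A \<Longrightarrow> a2 \<in> A \<Longrightarrow> b1 \<in> B \<Longrightarrow> b2 \<in> B \<Longrightarrow>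
      adj E a1 b1 \<Longrightarrow> adj E a2 b2 \<Longrightarrow> a1 = a2 \<and> b1 = b2"
  proof -
    fix a1 a2 b1 b2 assume m: "a1 \<in> A" "a2 \<in> A" "b1 \<in> B" "b2 \<in> B" and e: "adj E a1 b1" "adj E a2 b2"
    note A1 = Amem[OF m(1)] and A2 = Amem[OF m(2)] and B1 = Bmem[OF m(3)] and B2 = Bmem[OF m(4)]
    have ne: "a1 \<noteq> b1" "a1 \<noteq> b2" "a2 \<noteq> b1" "a2 \<noteq> b2" using A1 A2 B1 B2 by auto
    have s1: "adj E b1 v" using B1 adj_sym[of E v b1] by blast
    have s2: "adj E a2 u" using A2 adj_sym[of E u a2] by blast
    have s3: "adj E b2 a2" using e(2) by (rule adj_sym)
    show "a1 = a2 \<and> b1 = b2"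
    proof (rule ccontr)
      assume nn: "\<not> (a1 = a2 \<and> b1 = b2)"
      show False
      proof (cases "a1 = a2")
        case True
        then have "b1 \<noteq> b2" using nn by simp
        then show False using cyc4[of a1 b1 v b2] e(1) s1 B2 s3 True ne B1 B2 A1 by auto
      next
        case False
        show False
        proof (cases "b1 = b2")
          case True
          then show False using cyc4[of u a1 b1 a2] A1 A2 B1 e(1) s3 s2 False ne by auto
        next
          case False2: False
          show False using cyc6[of u a1 b1 v b2 a2] A1 e(1) s1 B2 s3 s2 False False2 ne A2 B1 d by auto
        qed
      qed
    qed
  qed
  have ex: "\<exists>a\<in>A. \<exists>b\<in>B. adj E a b"
  proof (rule ccontr)
    assume nex: "\<not> (\<exists>a\<in>A. \<exists>b\<in>B. adj E a b)"
    have cl: "\<forall>x\<in>insert u A. \<forall>y. adj E x y \<longrightarrow> y \<in> insert u A"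
    proof (intro ballI allI impI)
      fix x y assume x: "x \<in> insert u A" and xy: "adj E x y"
      show "y \<in> insert u A"
      proof (cases "x = u")
        case True then show ?thesis using xy adj_V[OF xy] unfolding A_def by auto
      next
        case False
        then have "x \<in> A" using x by simp
        then show ?thesis using nbA[of x y] nex xy by blast
      qed
    qed
    show False
      by (rule closed_set[of u "insert u A" v]) (use cl V d Amem in auto)
  qed
  then obtain a0 b0 where ab0: "a0 \<in> A" "b0 \<in> B" "adj E a0 b0" by blast
  have leafA: "\<And>w. w \<in> A - {a0} \<Longrightarrow> \<forall>x. adj E w x \<longleftrightarrow> x = u"
  proof -
    fix w assume w: "w \<in> A - {a0}"
    show "\<forall>x. adj E w x \<longleftrightarrow> x = u"
    proof (intro allI iffI)
      fix x assume wx: "adj E w x"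
      show "x = u"
      proof (rule ccontr)
        assume "x \<noteq> u"
        then have "x \<in> B" using nbA w wx by blast
        then show False using uniq[of w a0 x b0] w wx ab0 by auto
      qed
    next
      fix x assume "x = u"
      then show "adj E w x" using Amem[of w] w adj_sym[of E u w] by blast
    qed
  qed
  have leafB: "\<And>w. w \<in> B - {b0} \<Longrightarrow> \<forall>x. adj E w x \<longleftrightarrow> x = v"
  proof -
    fix w assume w: "w \<in> B - {b0}"
    show "\<forall>x. adj E w x \<longleftrightarrow> x = v"
    proof (intro allI iffI)
      fix x assume wx: "adj E w x"
      show "x = v"
      proof (rule ccontr)
        assume "x \<noteq> v"
        then have "x \<in> A" using nbB w wx by blast
        moreover have "adj E x w" using wx by (rule adj_sym)
        ultimately show False using uniq[of x a0 w b0] w ab0 by auto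
      qed
    next
      fix x assume "x = v"
      then show "adj E w x" using Bmem[of w] w adj_sym[of E v w] by blast
    qed
  qed
  have AV: "A - {a0} \<subseteq> V" "B - {b0} \<subseteq> V" unfolding A_def B_def by auto
  have fin: "finite (A - {a0})" "finite (B - {b0})" using finite_subset[OF AV(1) finV] finite_subset[OF AV(2) finV] by blast+
  show ?thesis
  proof (cases "card (A - {a0}) \<ge> 2 \<or> card (B - {b0}) \<ge> 2")
    case True
    then show ?thesis
    proof
      assume "card (A - {a0}) \<ge> 2" then show ?thesis using D2_set[OF V(1) AV(1) _ leafA] by blast
    next
      assume "card (B - {b0}) \<ge> 2" then show ?thesis using D2_set[OF V(2) AV(2) _ leafB] by blast
    qed
  next
    case False
    have Ac: "A - {a0} = {} \<or> (\<exists>x. A - {a0} = {x})" using card_le1_cases[OF fin(1)] False by simp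
    have Bc: "B - {b0} = {} \<or> (\<exists>x. B - {b0} = {x})" using card_le1_cases[OF fin(2)] False by simp
    note a0 = Amem[OF ab0(1)] and b0 = Bmem[OF ab0(2)]
    have ua0: "adj E u a0" using a0 by simp
    have b0v: "adj E b0 v" using b0 adj_sym[of E v b0] by blast
    have ab: "a0 \<noteq> b0" using a0 b0 by auto
    have Aeq: "A = insert a0 (A - {a0})" "B = insert b0 (B - {b0})" using ab0 by auto
    have "\<exists>xs. distinct xs \<and> set xs = V \<and> walk E xs \<and> 4 \<le> length xs \<and> length xs \<le> 6"
    proof (cases "A - {a0} = {}")
      case True
      note TA = True
      show ?thesis
      proof (cases "B - {b0} = {}")
        case True
        have "set [u, a0, b0, v] = V" using cover Aeq TA True by auto
        moreover have "distinct [u, a0, b0, v]" using a0 b0 ab d by auto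
        moreover have "walk E [u, a0, b0, v]" using ua0 ab0(3) b0v by simp
        ultimately show ?thesis by (intro exI[of _ "[u, a0, b0, v]"]) simp
      next
        case False
        then obtain b1 where b1: "B - {b0} = {b1}" using Bc by blast
        have b1m: "b1 \<in> B" "b1 \<noteq> b0" using b1 by auto
        note B1 = Bmem[OF b1m(1)]
        have "set [u, a0, b0, v, b1] = V" using cover Aeq TA b1 by auto
        moreover have "distinct [u, a0, b0, v, b1]" using a0 b0 ab d B1 b1m ab0 Amem by auto
        moreover have "walk E [u, a0, b0, v, b1]" using ua0 ab0(3) b0v B1 by simp
        ultimately show ?thesis by (intro exI[of _ "[u, a0, b0, v, b1]"]) simp
      qed
    next
      case False
      then obtain a1 where a1: "A - {a0} = {a1}" using Ac by blast
      have a1m: "a1 \<in> A" "a1 \<noteq> a0" using a1 by auto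
      note A1 = Amem[OF a1m(1)]
      have a1u: "adj E a1 u" using A1 adj_sym[of E u a1] by blast
      show ?thesis
      proof (cases "B - {b0} = {}")
        case True
        have "set [a1, u, a0, b0, v] = V" using cover Aeq True a1 by auto
        moreover have "distinct [a1, u, a0, b0, v]" using a0 b0 ab d A1 a1m Bmem ab0 by auto
        moreover have "walk E [a1, u, a0, b0, v]" using a1u ua0 ab0(3) b0v by simp
        ultimately show ?thesis by (intro exI[of _ "[a1, u, a0, b0, v]"]) simp
      next
        case False
        then obtain b1 where b1: "B - {b0} = {b1}" using Bc by blast
        have b1m: "b1 \<in> B" "b1 \<noteq> b0" using b1 by auto
        note B1 = Bmem[OF b1m(1)]
        have "a1 \<noteq> b1" using A1 B1 by auto
        have "set [a1, u, a0, b0, v, b1] = V" using cover Aeq a1 b1 by auto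
        moreover have "distinct [a1, u, a0, b0, v, b1]"
          using a0 b0 ab d A1 a1m B1 b1m Amem Bmem ab0 \<open>a1 \<noteq> b1\<close> by auto
        moreover have "walk E [a1, u, a0, b0, v, b1]" using a1u ua0 ab0(3) b0v B1 by simp
        ultimately show ?thesis by (intro exI[of _ "[a1, u, a0, b0, v, b1]"]) simp
      qed
    qed
    then obtain xs where xs: "distinct xs" "set xs = V" "walk E xs" "4 \<le> length xs" "length xs \<le> 6" by blast
    have g: "graph_iso V E {0..<length xs} (path_edges (length xs))" using path_iso xs by blast
    have "length xs = 4 \<or> length xs = 5 \<or> length xs = 6" using xs by linarith
    then show ?thesis using g nP4 nP5 nP6 by auto
  qed
qed

lemma anti_D2:
  assumes "u \<in> V" "v \<in> V" "u \<noteq> v" "anti V E u v"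
  shows "2 \<le> Dmax V E"
  using anti_D2_adj anti_D2_nonadj assms by blast

end



context T2 begin

lemma leaf_of: "\<forall>x. adj E v x \<longleftrightarrow> x = w \<Longrightarrow> v \<in> V \<Longrightarrow> v \<in> {l \<in> V. is_leaf V E l \<and> adj E w l}"
proof -
  assume h: "\<forall>x. adj E v x \<longleftrightarrow> x = w" and v: "v \<in> V"
  have vw: "adj E v w" using h by blast
  have wV: "w \<in> V" using adj_V[OF vw] by simp
  have "{x \<in> V. adj E v x} = {w}" using h wV by auto
  then have "is_leaf V E v" using v by (simp add: is_leaf_def degree_def)
  moreover have "adj E w v" using vw by (rule adj_sym)
  ultimately show ?thesis using v by simp
qed

lemma nonnb_bound:
  assumes u: "u \<in> V"
  shows "card {v \<in> V. v \<noteq> u \<and> {u, v} \<notin> Lambda_edges V E} + 1 \<le> Dmax V E"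
proof -
  define N where "N = {v \<in> V. v \<noteq> u \<and> {u, v} \<notin> Lambda_edges V E}"
  have TA: "\<And>v. v \<in> N \<Longrightarrow> twin V E u v \<or> anti V E u v"
    using twin_or_anti u unfolding N_def by blast
  have finN: "finite N" using finV unfolding N_def by simp
  show ?thesis
  proof (cases "\<exists>v\<in>V. v \<noteq> u \<and> anti V E u v")
    case True
    then obtain v where v: "v \<in> V" "v \<noteq> u" "anti V E u v" by blast
    have D: "2 \<le> Dmax V E" using anti_D2[OF u v(1)] v by auto
    have "N \<subseteq> {v}"
    proof
      fix v' assume v': "v' \<in> N"
      have m: "v' \<in> V" "v' \<noteq> u" using v' unfolding N_def by auto
      show "v' \<in> {v}"
      proof (cases "twin V E u v'")
        case True
        then show ?thesis using anti_twin_excl[OF u v(1) m(1)] v m by auto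
      next
        case False
        then have "anti V E u v'" using TA v' by blast
        then show ?thesis using anti_unique[OF u v(1) m(1)] v m by fastforce
      qed
    qed
    then have "card N \<le> 1" by (metis card.insert card_mono finite.emptyI insert_absorb2 card.empty finite.insertI One_nat_def empty_iff insert_not_empty)
    then show ?thesis using D N_def by simp
  next
    case False
    then have TW: "\<And>v. v \<in> N \<Longrightarrow> twin V E u v" using TA unfolding N_def by blast
    show ?thesis
    proof (cases "N = {}")
      case True
      then show ?thesis using Dmax_pos by (simp add: N_def[symmetric])
    next
      case False
      then obtain v0 where v0: "v0 \<in> N" by blast
      obtain w where w: "\<forall>x. adj E u x \<longleftrightarrow> x = w"
        using twin_struct[OF u _ _ TW[OF v0]] v0 unfolding N_def by blast
      have wV: "w \<in> V" using w adj_V[of u w] by blast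
      define L where "L = {l \<in> V. is_leaf V E l \<and> adj E w l}"
      have uL: "u \<in> L" using leaf_of[OF w u] L_def by simp
      have "N \<subseteq> L - {u}"
      proof
        fix v assume v: "v \<in> N"
        have m: "v \<in> V" "v \<noteq> u" using v unfolding N_def by auto
        obtain w' where w': "\<forall>x. adj E u x \<longleftrightarrow> x = w'" "\<forall>x. adj E v x \<longleftrightarrow> x = w'"
          using twin_struct[OF u m(1) m(2)[symmetric] TW[OF v]] by blast
        have "w' = w" using w w'(1) by blast
        then show "v \<in> L - {u}" using leaf_of[OF w'(2) m(1)] m L_def by simp
      qed
      moreover have "finite L" using finV unfolding L_def by simp
      ultimately have "card N \<le> card (L - {u})" by (intro card_mono) auto
      also have "\<dots> = card L - 1" using uL by simp
      finally have "card N + 1 \<le> card L" using uL \<open>finite L\<close>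
        by (metis One_nat_def Suc_leI add.commute card_gt_0_iff empty_iff le_diff_conv2 plus_1_eq_Suc)
      then show ?thesis using Dmax_ge[OF wV] L_def N_def by simp
    qed
  qed
qed

lemma handshake:
  "(\<Sum>u\<in>V. card {v \<in> V. v \<noteq> u \<and> {u, v} \<in> Lambda_edges V E}) = 2 * card (Lambda_edges V E)"
proof -
  define L where "L = Lambda_edges V E"
  have LV: "\<And>X. X \<in> L \<Longrightarrow> X \<subseteq> V \<and> card X = 2" unfolding L_def Lambda_edges_def by auto
  have finL: "finite L" using finV LV by (metis (no_types, lifting) Pow_iff finite_Pow_iff finite_subset subsetI)
  have c1: "\<And>u. u \<in> V \<Longrightarrow> card {v \<in> V. v \<noteq> u \<and> {u, v} \<in> L} = card {X \<in> L. u \<in> X}"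
  proof -
    fix u assume u: "u \<in> V"
    have "bij_betw (\<lambda>v. {u, v}) {v \<in> V. v \<noteq> u \<and> {u, v} \<in> L} {X \<in> L. u \<in> X}"
      unfolding bij_betw_def
    proof
      show "inj_on (\<lambda>v. {u, v}) {v \<in> V. v \<noteq> u \<and> {u, v} \<in> L}"
        by (auto simp: inj_on_def doubleton_eq_iff)
      show "(\<lambda>v. {u, v}) ` {v \<in> V. v \<noteq> u \<and> {u, v} \<in> L} = {X \<in> L. u \<in> X}"
      proof
        show "(\<lambda>v. {u, v}) ` {v \<in> V. v \<noteq> u \<and> {u, v} \<in> L} \<subseteq> {X \<in> L. u \<in> X}" by auto
        show "{X \<in> L. u \<in> X} \<subseteq> (\<lambda>v. {u, v}) ` {v \<in> V. v \<noteq> u \<and> {u, v} \<in> L}"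
        proof
          fix X assume X: "X \<in> {X \<in> L. u \<in> X}"
          then have "card X = 2" "X \<subseteq> V" "u \<in> X" "X \<in> L" using LV by auto
          then obtain a b where ab: "X = {a, b}" "a \<noteq> b" by (meson card_2_iff)
          then have "\<exists>v. X = {u, v} \<and> v \<noteq> u" using \<open>u \<in> X\<close> by auto
          then obtain v where "X = {u, v}" "v \<noteq> u" by blast
          then show "X \<in> (\<lambda>v. {u, v}) ` {v \<in> V. v \<noteq> u \<and> {u, v} \<in> L}"
            using \<open>X \<subseteq> V\<close> \<open>X \<in> L\<close> by auto
        qed
      qed
    qed
    then show "card {v \<in> V. v \<noteq> u \<and> {u, v} \<in> L} = card {X \<in> L. u \<in> X}" by (rule bij_betw_same_card)
  qed
  have "(\<Sum>u\<in>V. card {v \<in> V. v \<noteq> u \<and> {u, v} \<in> L}) = (\<Sum>u\<in>V. card {X \<in> L. u \<in> X})"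
    using c1 by (rule sum.cong[OF refl])
  also have "\<dots> = (\<Sum>u\<in>V. \<Sum>X\<in>L. if u \<in> X then 1 else 0)"
  proof (rule sum.cong[OF refl])
    fix u assume "u \<in> V"
    have "{X \<in> L. u \<in> X} = L \<inter> {X. u \<in> X}" by auto
    then show "card {X \<in> L. u \<in> X} = (\<Sum>X\<in>L. if u \<in> X then 1 else 0)"
      using finL by (simp add: sum.If_cases)
  qed
  also have "\<dots> = (\<Sum>X\<in>L. \<Sum>u\<in>V. if u \<in> X then 1 else 0)" by (rule sum.swap)
  also have "\<dots> = (\<Sum>X\<in>L. 2)"
  proof (rule sum.cong[OF refl])
    fix X assume X: "X \<in> L"
    have "(\<Sum>u\<in>V. if u \<in> X then 1 else 0) = card (V \<inter> X)" using finV by (simp add: sum.If_cases)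
    also have "V \<inter> X = X" using LV[OF X] by auto
    finally show "(\<Sum>u\<in>V. if u \<in> X then 1 else 0) = (2::nat)" using LV[OF X] by simp
  qed
  also have "\<dots> = 2 * card L" by simp
  finally show ?thesis unfolding L_def .
qed

lemma main: "real (card (Lambda_edges V E)) \<ge> 1/2 * real (card V) * (real (card V) - real (Dmax V E))"
proof -
  define n where "n = card V"
  define D where "D = Dmax V E"
  have per: "\<And>u. u \<in> V \<Longrightarrow> real (card {v \<in> V. v \<noteq> u \<and> {u, v} \<in> Lambda_edges V E}) \<ge> real n - real D"
  proof -
    fix u assume u: "u \<in> V"
    define P where "P = {v \<in> V. v \<noteq> u \<and> {u, v} \<in> Lambda_edges V E}"
    define N where "N = {v \<in> V. v \<noteq> u \<and> {u, v} \<notin> Lambda_edges V E}"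
    have "P \<union> N = V - {u}" "P \<inter> N = {}" unfolding P_def N_def by auto
    moreover have "finite P" "finite N" using finV unfolding P_def N_def by auto
    ultimately have "card P + card N = n - 1" using u finV n_def
      by (metis card_Diff_singleton card_Un_disjoint)
    moreover have "card N + 1 \<le> D" using nonnb_bound[OF u] N_def D_def by simp
    moreover have "n \<ge> 1" using big n_def by simp
    ultimately have "real (card P) \<ge> real n - real D" by linarith
    then show "real (card {v \<in> V. v \<noteq> u \<and> {u, v} \<in> Lambda_edges V E}) \<ge> real n - real D"
      unfolding P_def .
  qed
  have "real n * (real n - real D) = (\<Sum>u\<in>V. real n - real D)" using n_def by simp
  also have "\<dots> \<le> (\<Sum>u\<in>V. real (card {v \<in> V. v \<noteq> u \<and> {u, v} \<in> Lambda_edges V E}))"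
    by (rule sum_mono) (rule per)
  also have "\<dots> = real (\<Sum>u\<in>V. card {v \<in> V. v \<noteq> u \<and> {u, v} \<in> Lambda_edges V E})" by simp
  also have "\<dots> = 2 * real (card (Lambda_edges V E))" using handshake by simp
  finally show ?thesis unfolding n_def D_def by simp
qed

end

theorem lemma2:
  fixes V :: "'a set" and E :: "'a set set"
  assumes "is_tree V E"
    and "card V \<ge> 4"
    and "\<not> graph_iso V E {0..<card V} (star_edges (card V))"
    and "\<not> graph_iso V E {0..<4} (path_edges 4)"
    and "\<not> graph_iso V E {0..<5} (path_edges 5)"
    and "\<not> graph_iso V E {0..<6} (path_edges 6)"
  shows "real (card (Lambda_edges V E)) \<ge> 1/2 * real (card V) * (real (card V) - real (Dmax V E))"
proof -
  interpret T2 V E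
    by unfold_locales (use assms in auto)
  show ?thesis by (rule main)
qed


end
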